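(* Let $L=\mathbb{Z}v$ be a one-dimensional lattice with $v\in\mathbb{R}_{>0}$, and assume $b\ge3v+1$. Then two elements chosen independently and uniformly at random from $L\cap[0,b)$ generate $L$ with probability greater than $\frac{3^3}{\pi^22^3}>\frac13$. *)

theory Defs
  imports Complex_Main
begin

definition lattice1 :: "real \<Rightarrow> real set" where
  "lattice1 v = range (\<lambda>k::int. of_int k * v)"

definition gen2 :: "real \<Rightarrow> real \<Rightarrow> real set" where
  "gen2 x y = {of_int m * x + of_int n * y | m n :: int. True}"

definition sample :: "real \<Rightarrow> real \<Rightarrow> real set" where
  "sample v b = lattice1 v \<inter> {0..<b}"

definition gen_prob :: "real \<Rightarrow> real \<Rightarrow> real" where
  "gen_prob v b =
     real (card {(x, y). x \<in> sample v b \<and> y \<in> sample v b \<and> gen2 x y = lattice1 v})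
     / real (card (sample v b))^2"

end

theory Submission
  imports Defs "HOL-Analysis.Complex_Transcendental"
begin

lemma sum_odd_sq: "(\<Sum>k=1..K. 1 / (2 * real k + 1)^2) \<le> 1/4 - 1/(4 * (real K + 1))"
proof (induction K)
  case 0
  then show ?case by simp
next
  case (Suc K)
  have e: "1/(4 * (real K + 1)) - 1/(4*(real K + 2)) = 1/(4 * (real K + 1) * (real K + 2))"
    by (simp add: divide_simps)
  have "4 * (real K + 1) * (real K + 2) \<le> (2 * real (Suc K) + 1)^2"
    by (simp add: power2_eq_square algebra_simps)
  then have "1 / (2 * real (Suc K) + 1)^2 \<le> 1/(4 * (real K + 1) * (real K + 2))"
    by (intro divide_left_mono) auto
  then have "1 / (2 * real (Suc K) + 1)^2 \<le> 1/(4 * (real K + 1)) - 1/(4*(real K + 2))"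
    using e by simp
  moreover have "(\<Sum>k=1..Suc K. 1 / (2 * real k + 1)^2) = (\<Sum>k=1..K. 1 / (2 * real k + 1)^2) + 1 / (2 * real (Suc K) + 1)^2"
    by simp
  moreover have "1/(4 * (real (Suc K) + 1)) = 1/(4*(real K + 2))" by (simp add: algebra_simps)
  ultimately show ?case using Suc by linarith
qed

lemma card_mult: assumes "d > 0" shows "card {i\<in>{1..M::nat}. d dvd i} = M div d"
proof -
  have "{i\<in>{1..M::nat}. d dvd i} = (\<lambda>q. d*q) ` {1..M div d}"
  proof (intro set_eqI iffI)
    fix i assume "i \<in> {i\<in>{1..M::nat}. d dvd i}"
    then have i: "1 \<le> i" "i \<le> M" "d dvd i" by auto
    then obtain q where "i = d*q" by (auto elim: dvdE)
    then have q: "i = d*q" "1 \<le> i" "i \<le> M" using i by auto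
    then have "q \<ge> 1" by (cases q) auto
    moreover have "q \<le> M div d" using q assms
      by (metis div_le_mono nonzero_mult_div_cancel_left not_gr0)
    ultimately show "i \<in> (\<lambda>q. d*q) ` {1..M div d}" using q by auto
  next
    fix i assume "i \<in> (\<lambda>q. d*q) ` {1..M div d}"
    then obtain q where q0: "q \<in> {1..M div d}" "i = d*q" by (rule imageE) simp
    then have q: "i = d*q" "1 \<le> q" "q \<le> M div d" unfolding atLeastAtMost_iff by auto
    have "d*q \<le> d * (M div d)" using q by simp
    also have "\<dots> \<le> M" by simp
    finally show "i \<in> {i\<in>{1..M::nat}. d dvd i}" using q assms by auto
  qed
  moreover have "inj_on (\<lambda>q. d*q) {1..M div d}" using assms by (auto simp: inj_on_def)
  ultimately show ?thesis by (simp add: card_image)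
qed

lemma card_A: assumes "d > 0"
  shows "card {(i,j). i\<in>{1..M::nat} \<and> j\<in>{1..M} \<and> d dvd i \<and> d dvd j} = (M div d)^2"
proof -
  have "{(i,j). i\<in>{1..M::nat} \<and> j\<in>{1..M} \<and> d dvd i \<and> d dvd j}
      = {i\<in>{1..M::nat}. d dvd i} \<times> {i\<in>{1..M::nat}. d dvd i}" by auto
  then show ?thesis using card_mult[OF assms, of M] by (simp add: card_cartesian_product power2_eq_square)
qed

lemma real_div_sq: assumes "d > 0" shows "real ((M::nat) div d)^2 \<le> real M^2 / real d^2"
proof -
  have "(M div d) * d \<le> M" by simp
  then have "real (M div d) * real d \<le> real M" by (metis of_nat_le_iff of_nat_mult)
  then have "real (M div d) \<le> real M / real d" using assms
    by (simp add: pos_le_divide_eq)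
  then have "real (M div d)^2 \<le> (real M / real d)^2" by (rule power_mono) simp
  then show ?thesis by (simp add: power_divide)
qed

lemma count_bad:
  fixes M :: nat assumes "M \<ge> 1"
  shows "real (card {(i,j). i\<in>{1..M} \<and> j\<in>{1..M} \<and> \<not> coprime i j}) < real M^2 / 2"
proof -
  define A where "A d = {(i,j). i\<in>{1..M::nat} \<and> j\<in>{1..M} \<and> d dvd i \<and> d dvd j}" for d
  have sub: "{(i,j). i\<in>{1..M} \<and> j\<in>{1..M} \<and> \<not> coprime i j} \<subseteq> A 2 \<union> (\<Union>k\<in>{1..M}. A (2*k+1))"
  proof
    fix x assume "x \<in> {(i,j). i\<in>{1..M} \<and> j\<in>{1..M} \<and> \<not> coprime i j}"
    then obtain i j where x: "x = (i,j)" "i\<in>{1..M}" "j\<in>{1..M}" "\<not> coprime i j" by auto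
    then have "gcd i j \<noteq> 1" by (simp add: coprime_iff_gcd_eq_1)
    moreover have "gcd i j \<noteq> 0" using x(2) by auto
    ultimately have p2: "gcd i j \<ge> 2" by linarith
    define p where "p = (if even (gcd i j) then 2 else gcd i j)"
    have pi: "p dvd i" "p dvd j" unfolding p_def
      by (auto intro: dvd_trans[of 2 "gcd i j"])
    have pp: "p \<ge> 2" "p = 2 \<or> odd p" unfolding p_def using p2 by auto
    have "p \<le> i" using x(2) pi by (simp add: dvd_imp_le)
    show "x \<in> A 2 \<union> (\<Union>k\<in>{1..M}. A (2*k+1))"
    proof (cases "even p")
      case True
      then have "p = 2" using pp by auto
      then show ?thesis using x pi by (auto simp: A_def)
    next
      case False
      then obtain k where k: "p = 2*k+1" by (metis oddE)
      have "k \<ge> 1" using k pp by (cases k) auto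
      moreover have "k \<le> M" using k \<open>p \<le> i\<close> x(2) by auto
      ultimately show ?thesis using x pi k by (auto simp: A_def)
    qed
  qed
  have fin: "finite (A d)" for d
    by (rule finite_subset[of _ "{1..M}\<times>{1..M}"]) (auto simp: A_def)
  have "card {(i,j). i\<in>{1..M} \<and> j\<in>{1..M} \<and> \<not> coprime i j} \<le> card (A 2 \<union> (\<Union>k\<in>{1..M}. A (2*k+1)))"
    by (rule card_mono) (use sub fin in auto)
  also have "\<dots> \<le> card (A 2) + card (\<Union>k\<in>{1..M}. A (2*k+1))" by (rule card_Un_le)
  also have "\<dots> \<le> card (A 2) + (\<Sum>k\<in>{1..M}. card (A (2*k+1)))"
    using card_UN_le[of "{1..M}" "\<lambda>k. A (2*k+1)"] by simp
  finally have c: "real (card {(i,j). i\<in>{1..M} \<and> j\<in>{1..M} \<and> \<not> coprime i j})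
     \<le> real ((M div 2)^2) + (\<Sum>k\<in>{1..M}. real ((M div (2*k+1))^2))"
    unfolding A_def using card_A by (simp del: of_nat_power flip: of_nat_sum of_nat_add)
  have "real ((M div 2)^2) \<le> real M^2 / 4" using real_div_sq[of 2 M] by simp
  moreover have "(\<Sum>k\<in>{1..M}. real ((M div (2*k+1))^2)) \<le> (\<Sum>k\<in>{1..M}. real M^2 * (1 / (2 * real k + 1)^2))"
  proof (rule sum_mono)
    fix k assume "k \<in> {1..M}"
    show "real ((M div (2*k+1))^2) \<le> real M^2 * (1 / (2 * real k + 1)^2)"
      using real_div_sq[of "2*k+1" M] by (simp add: add.commute)
  qed
  moreover have "(\<Sum>k\<in>{1..M}. real M^2 * (1 / (2 * real k + 1)^2)) \<le> real M^2 * (1/4 - 1/(4 * (real M + 1)))"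
    by (simp only: sum_distrib_left[symmetric]) (intro mult_left_mono sum_odd_sq, simp)
  moreover have "real M^2 * (1/4 - 1/(4 * (real M + 1))) < real M^2 / 4"
    using assms by (simp add: field_simps)
  ultimately show ?thesis using c by linarith
qed

lemma count_good:
  fixes M :: nat assumes "M \<ge> 1"
  shows "real (card {(i,j). i < M+1 \<and> j < M+1 \<and> coprime i j}) > real M^2 / 2 + 2"
proof -
  define S where "S = {1..M} \<times> {1..M}"
  define B where "B = {(i,j). i\<in>{1..M} \<and> j\<in>{1..M} \<and> \<not> coprime i j}"
  have BS: "B \<subseteq> S" by (auto simp: B_def S_def)
  have finS: "finite S" by (simp add: S_def)
  have "card (S - B) = M^2 - card B"
    using card_Diff_subset[OF finite_subset[OF BS finS] BS] by (simp add: S_def power2_eq_square)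
  then have cSB: "real (card (S - B)) = real M^2 - real (card B)"
    using card_mono[OF finS BS] by (simp add: S_def power2_eq_square of_nat_diff)
  have sub: "(S - B) \<union> {(0,1),(1,0)} \<subseteq> {(i,j). i < M+1 \<and> j < M+1 \<and> coprime i j}"
    using assms by (auto simp: S_def B_def)
  have fin2: "finite {(i,j). i < M+1 \<and> j < M+1 \<and> coprime i j}"
    by (rule finite_subset[of _ "{0..<M+1}\<times>{0..<M+1}"]) auto
  have "card ((S - B) \<union> {(0,1),(1,0)}) = card (S - B) + 2"
    using finS by (subst card_Un_disjoint) (auto simp: S_def)
  then have "card (S - B) + 2 \<le> card {(i,j). i < M+1 \<and> j < M+1 \<and> coprime i j}"
    using card_mono[OF fin2 sub] by simp
  then show ?thesis using cSB count_bad[OF assms] unfolding B_def by linarith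
qed

lemma gen_iff:
  fixes v :: real assumes "v > 0"
  shows "gen2 (real i * v) (real j * v) = lattice1 v \<longleftrightarrow> coprime i j"
proof
  assume h: "gen2 (real i * v) (real j * v) = lattice1 v"
  have "v \<in> lattice1 v" unfolding lattice1_def by (auto intro: range_eqI[of _ _ 1])
  then have "v \<in> gen2 (real i * v) (real j * v)" using h by simp
  then obtain m n :: int where "v = of_int m * (real i * v) + of_int n * (real j * v)"
    unfolding gen2_def by blast
  then have "1 * v = (of_int (m * int i + n * int j)) * v" by (simp add: algebra_simps)
  then have "real_of_int (m * int i + n * int j) = 1" using assms by simp
  then have "m * int i + n * int j = 1" by linarith
  then have "coprime (int i) (int j)"
    by (metis coprime_def dvd_add dvd_mult)
  then show "coprime i j" by simp
next
  assume c: "coprime i j"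
  then have "coprime (int i) (int j)" by simp
  then obtain m n :: int where mn: "m * int i + n * int j = 1"
    by (metis bezout_int coprime_iff_gcd_eq_1)
  show "gen2 (real i * v) (real j * v) = lattice1 v"
  proof (intro set_eqI iffI)
    fix x assume "x \<in> gen2 (real i * v) (real j * v)"
    then obtain a b :: int where "x = of_int a * (real i * v) + of_int b * (real j * v)"
      unfolding gen2_def by auto
    then have "x = of_int (a * int i + b * int j) * v" by (simp add: algebra_simps)
    then show "x \<in> lattice1 v" unfolding lattice1_def by (rule image_eqI) simp
  next
    fix x assume "x \<in> lattice1 v"
    then obtain k :: int where x: "x = of_int k * v" unfolding lattice1_def by auto
    have "x = of_int (k*m) * (real i * v) + of_int (k*n) * (real j * v)"
    proof -
      have "of_int (k*m) * (real i * v) + of_int (k*n) * (real j * v) = of_int k * of_int (m * int i + n * int j) * v"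
        by (simp add: algebra_simps)
      then show ?thesis using mn x by simp
    qed
    then show "x \<in> gen2 (real i * v) (real j * v)" unfolding gen2_def by blast
  qed
qed

lemma sample_eq:
  fixes v b :: real assumes "v > 0"
  shows "sample v b = (\<lambda>k. real k * v) ` {0..<nat \<lceil>b/v\<rceil>}"
proof (intro set_eqI iffI)
  fix x assume "x \<in> sample v b"
  then obtain k :: int where k: "x = of_int k * v" "0 \<le> of_int k * v" "of_int k * v < b"
    unfolding sample_def lattice1_def by auto
  have "k \<ge> 0" using k(2) assms by (simp add: zero_le_mult_iff)
  have "of_int k < b / v" using k(3) assms by (simp add: field_simps)
  then have "\<not> (b/v \<le> of_int k)" by simp
  then have "\<not> (\<lceil>b/v\<rceil> \<le> k)" by (simp add: ceiling_le_iff)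
  then have "k < \<lceil>b/v\<rceil>" by simp
  then have "nat k < nat \<lceil>b/v\<rceil>" using \<open>k \<ge> 0\<close> by (metis nat_less_eq_zless)
  then have "nat k \<in> {0..<nat \<lceil>b/v\<rceil>}" unfolding atLeastLessThan_iff using le0 by blast
  moreover have "x = real (nat k) * v" using k(1) \<open>k \<ge> 0\<close> by simp
  ultimately show "x \<in> (\<lambda>k. real k * v) ` {0..<nat \<lceil>b/v\<rceil>}" by blast
next
  fix x assume "x \<in> (\<lambda>k. real k * v) ` {0..<nat \<lceil>b/v\<rceil>}"
  then obtain k :: nat where k0: "k \<in> {0..<nat \<lceil>b/v\<rceil>}" "x = real k * v" by (rule imageE) simp
  then have k: "x = real k * v" "k < nat \<lceil>b/v\<rceil>" unfolding atLeastLessThan_iff by auto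
  then have "int k < \<lceil>b/v\<rceil>" by simp
  then have "\<not> (\<lceil>b/v\<rceil> \<le> int k)" by simp
  then have "\<not> (b/v \<le> of_int (int k))" by (simp add: ceiling_le_iff)
  then have "real k < b / v" by simp
  then have "real k * v < b" using assms by (simp add: field_simps)
  moreover have "x = of_int (int k) * v" using k by simp
  moreover have "x \<in> lattice1 v" unfolding lattice1_def using \<open>x = of_int (int k) * v\<close> by (rule image_eqI) simp
  ultimately show "x \<in> sample v b" unfolding sample_def using k assms by auto
qed

theorem lemma7p9:
  fixes v b :: real
  assumes "v > 0" and "b \<ge> 3 * v + 1"
  shows "gen_prob v b > 3^3 / (pi^2 * 2^3) \<and> 3^3 / (pi^2 * 2^3) > (1/3 :: real)"
proof -
  define N where "N = nat \<lceil>b/v\<rceil>"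
  have "b / v \<ge> (3 * v + 1) / v" using assms by (intro divide_right_mono) auto
  moreover have "(3 * v + 1) / v = 3 + 1/v" using assms by (simp add: field_simps)
  ultimately have "b / v \<ge> 3 + 1/v" by simp
  moreover have "1/v > 0" using assms by simp
  ultimately have "b/v > 3" by linarith
  then have "\<not> (\<lceil>b/v\<rceil> \<le> 3)" by (simp add: ceiling_le_iff)
  then have "\<lceil>b/v\<rceil> \<ge> 4" by linarith
  then have N4: "N \<ge> 4" unfolding N_def by arith
  define M where "M = N - 1"
  have NM: "N = M + 1" "M \<ge> 3" using N4 unfolding M_def by auto
  have inj: "inj (\<lambda>k::nat. real k * v)" using assms by (auto simp: inj_def)
  have se: "sample v b = (\<lambda>k. real k * v) ` {0..<N}" using sample_eq[OF assms(1)] N_def by simp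
  have cs: "card (sample v b) = N" unfolding se by (simp add: card_image inj_on_subset[OF inj])
  have good: "{(x, y). x \<in> sample v b \<and> y \<in> sample v b \<and> gen2 x y = lattice1 v}
     = (\<lambda>(i,j). (real i * v, real j * v)) ` {(i,j). i < N \<and> j < N \<and> coprime i j}"
    unfolding se using gen_iff[OF assms(1)] by auto
  have inj2: "inj (\<lambda>(i::nat,j::nat). (real i * v, real j * v))" using assms by (auto simp: inj_def)
  have cg: "card {(x, y). x \<in> sample v b \<and> y \<in> sample v b \<and> gen2 x y = lattice1 v}
     = card {(i,j). i < N \<and> j < N \<and> coprime i j}"
    unfolding good by (simp add: card_image inj_on_subset[OF inj2])
  have G: "real (card {(i,j). i < N \<and> j < N \<and> coprime i j}) > real M^2 / 2 + 2"
    using count_good[of M] NM by simp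
  have gp: "gen_prob v b = real (card {(i,j). i < N \<and> j < N \<and> coprime i j}) / (real M + 1)^2"
    unfolding gen_prob_def cg cs NM by simp
  have pos: "(real M + 1)^2 > 0" by simp
  have key: "(real M^2 / 2 + 2) / (real M + 1)^2 \<ge> 0.3427"
  proof -
    have "0.3427 * (real M + 1)^2 \<le> real M^2 / 2 + 2"
    proof -
      have "(real M - 2.2)^2 \<ge> 0" by simp
      then show ?thesis by (simp add: power2_eq_square algebra_simps)
    qed
    then show ?thesis using pos by (simp add: field_simps)
  qed
  have "gen_prob v b > 0.3427"
  proof -
    have "(real M^2 / 2 + 2) / (real M + 1)^2 < real (card {(i,j). i < N \<and> j < N \<and> coprime i j}) / (real M + 1)^2"
      using G pos by (simp add: divide_strict_right_mono)
    then show ?thesis using key gp by linarith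
  qed
  moreover have "3^3 / (pi^2 * 2^3) \<le> (0.3427::real)"
  proof -
    have "pi \<ge> 3.141592653588" using pi_approx by simp
    then have "pi^2 \<ge> 3.141592653588^2" by (rule power_mono) simp
    then show ?thesis by (simp add: field_simps)
  qed
  moreover have "3^3 / (pi^2 * 2^3) > (1/3 :: real)"
  proof -
    have "pi \<le> 3.1415926535899" using pi_approx by simp
    then have "pi^2 \<le> 3.1415926535899^2" by (rule power_mono) (use pi_gt_zero in linarith)
    moreover have "pi^2 > 0" by simp
    ultimately show ?thesis by (simp add: field_simps)
  qed
  ultimately show ?thesis by linarith
qed

end
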